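(* Let $M=(C,A,B)$ with $C\in\mathbb{R}^{p\times n}$, $A\in\mathbb{R}^{n\times n}$, $B\in\mathbb{R}^{n\times m}$ and $\rho(A)<1$. For any integers $d_1\ge d_2\ge1$, $$\|\mathcal{H}_{0,\infty,\infty}-\bar{\mathcal{H}}_{0,d_1,d_1}\|_2\le\sqrt2\,\|\mathcal{H}_{0,\infty,\infty}-\bar{\mathcal{H}}_{0,d_2,d_2}\|_2 .$$
   Context: $\mathcal{H}_{k,a,b}$ is the block Hankel matrix whose $(i,j)$ block ($1\le i\le a$, $1\le j\le b$, $a=b=\infty$ allowed) is $CA^{k+i+j-2}B$. For a finite matrix $P$, $\bar P$ denotes $P$ padded with zeros to a doubly infinite matrix. Norms of infinite matrices are operator norms on $\ell^2$. *)

theory Defs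
  imports "HOL-Analysis.Analysis" "Jordan_Normal_Form.Spectral_Radius"
begin

text \<open>Infinite real matrices indexed by natural numbers (rows, columns), i.e. operators
  on the sequence space l2 given by their matrix entries.\<close>
type_synonym inf_mat = "nat \<Rightarrow> nat \<Rightarrow> real"

text \<open>Operator norm on l2: supremum of the l2 norm of M x over finitely supported
  x with l2 norm at most 1 (finitely supported vectors are dense in l2), where the l2
  norm of M x is itself the supremum of its partial sums over the first N rows.\<close>
definition l2_opnorm :: "inf_mat \<Rightarrow> real" where
  "l2_opnorm M = Sup { sqrt (\<Sum>i<N. (\<Sum>j\<in>F. M i j * x j)\<^sup>2) | N F x.
       finite F \<and> (\<Sum>j\<in>F. (x j)\<^sup>2) \<le> 1 }"

text \<open>Block Hankel matrix H_{k,a,b} with (i,j) block (1-based) C A^(k+i+j-2) B,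
  flattened to scalar entries; blocks are p x m.  Block rows/columns beyond a resp. b
  are zero (i.e. the padded version); the guard s < p, t < m only matters for
  degenerate dimensions p = 0 or m = 0 (empty matrix, all entries zero); a = None / b = None means infinitely many.\<close>
definition block_hankel ::
  "real mat \<Rightarrow> real mat \<Rightarrow> real mat \<Rightarrow> nat \<Rightarrow> nat option \<Rightarrow> nat option \<Rightarrow> inf_mat" where
  "block_hankel C A B k a b = (\<lambda>r c.
     let p = dim_row C; m = dim_col B;
         i = r div p; s = r mod p; j = c div m; t = c mod m in
     if s < p \<and> t < m \<and> (case a of None \<Rightarrow> True | Some a' \<Rightarrow> i < a') \<and>
        (case b of None \<Rightarrow> True | Some b' \<Rightarrow> j < b')
     then (C * A ^\<^sub>m (k + i + j) * B) $$ (s, t) else 0)"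

end

theory Submission imports Defs begin

lemma smult_pow_mat: assumes "M \<in> carrier_mat n n"
  shows "(c \<cdot>\<^sub>m M) ^\<^sub>m k = (c ^ k :: 'a :: comm_ring_1) \<cdot>\<^sub>m (M ^\<^sub>m k)"
proof (induction k)
  case 0 then show ?case using assms by (auto intro!: eq_matI)
next
  case (Suc k)
  have "(c \<cdot>\<^sub>m M) ^\<^sub>m Suc k = (c ^ k \<cdot>\<^sub>m (M ^\<^sub>m k)) * (c \<cdot>\<^sub>m M)" using Suc by simp
  also have "\<dots> = c ^ Suc k \<cdot>\<^sub>m (M ^\<^sub>m Suc k)"
    using assms by (simp add: mult_smult_assoc_mat[of _ n n _ n] mult_smult_distrib[of _ n n _ n]) (auto intro!: eq_matI)
  finally show ?case .
qed

lemma smult_mat_vec: assumes "M \<in> carrier_mat n n" "v \<in> carrier_vec n"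
  shows "(c \<cdot>\<^sub>m M) *\<^sub>v v = (c :: 'a :: comm_ring_1) \<cdot>\<^sub>v (M *\<^sub>v v)"
  using assms by (auto intro!: eq_vecI simp: scalar_prod_def sum_distrib_left mult.assoc)

lemma eigenvalue_smult: assumes "M \<in> carrier_mat n n" "(c::complex) \<noteq> 0"
  shows "eigenvalue (c \<cdot>\<^sub>m M) e \<longleftrightarrow> eigenvalue M (e / c)"
proof
  assume "eigenvalue (c \<cdot>\<^sub>m M) e"
  then obtain v where v: "v \<in> carrier_vec n" "v \<noteq> 0\<^sub>v n" "(c \<cdot>\<^sub>m M) *\<^sub>v v = e \<cdot>\<^sub>v v"
    using assms unfolding eigenvalue_def eigenvector_def by auto
  have "M *\<^sub>v v = (1/c) \<cdot>\<^sub>v ((c \<cdot>\<^sub>m M) *\<^sub>v v)"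
    using smult_mat_vec[OF assms(1) v(1)] assms(2) by (auto intro!: eq_vecI)
  also have "\<dots> = (e/c) \<cdot>\<^sub>v v" using v(3) by (auto intro!: eq_vecI)
  finally show "eigenvalue M (e / c)" using v assms unfolding eigenvalue_def eigenvector_def by auto
next
  assume "eigenvalue M (e / c)"
  then obtain v where v: "v \<in> carrier_vec n" "v \<noteq> 0\<^sub>v n" "M *\<^sub>v v = (e/c) \<cdot>\<^sub>v v"
    using assms unfolding eigenvalue_def eigenvector_def by auto
  have "(c \<cdot>\<^sub>m M) *\<^sub>v v = c \<cdot>\<^sub>v (M *\<^sub>v v)" using smult_mat_vec[OF assms(1) v(1)] .
  also have "\<dots> = e \<cdot>\<^sub>v v" using v(3) assms(2) by (auto intro!: eq_vecI)
  finally show "eigenvalue (c \<cdot>\<^sub>m M) e" using v assms unfolding eigenvalue_def eigenvector_def by auto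
qed

lemma "A \<in> carrier_mat n n \<Longrightarrow> map_mat complex_of_real (A ^\<^sub>m k) = (map_mat complex_of_real A) ^\<^sub>m k"
  by (rule of_real_hom.mat_hom_pow)
lemma decay:
  fixes A :: "real mat"
  assumes A: "A \<in> carrier_mat n n" and sr: "spectral_radius (map_mat complex_of_real A) < 1"
  shows "\<exists>K r. 0 < r \<and> r < 1 \<and> (\<forall>k i j. i < n \<longrightarrow> j < n \<longrightarrow> \<bar>(A ^\<^sub>m k) $$ (i,j)\<bar> \<le> K * r ^ k)"
proof -
  define Ac where "Ac = map_mat complex_of_real A"
  have Ac: "Ac \<in> carrier_mat n n" using A unfolding Ac_def by auto
  define \<rho> where "\<rho> = max (spectral_radius Ac) 0"
  define r where "r = (\<rho> + 1) / 2"
  have r0: "0 < r" "r < 1" "\<rho> < r" using sr unfolding r_def \<rho>_def Ac_def by auto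
  define c where "c = complex_of_real (1 / r)"
  have c0: "c \<noteq> 0" using r0 unfolding c_def by auto
  define M where "M = c \<cdot>\<^sub>m Ac"
  have M: "M \<in> carrier_mat n n" using Ac unfolding M_def by auto
  have spec: "e \<in> spectrum M \<longleftrightarrow> e / c \<in> spectrum Ac" for e
    unfolding spectrum_def M_def using eigenvalue_smult[OF Ac c0] by auto
  have srM: "spectral_radius M < 1"
  proof (cases "spectrum Ac = {}")
    case True
    then have "spectrum M = {}" using spec by blast
    then show ?thesis using True sr unfolding spectral_radius_def Ac_def by simp
  next
    case False
    then obtain x where x: "x \<in> spectrum Ac" by auto
    have finA: "finite (spectrum Ac)" using card_finite_spectrum[OF Ac] by auto
    have finM: "finite (spectrum M)" using card_finite_spectrum[OF M] by auto
    have "c * x \<in> spectrum M" using spec[of "c * x"] x c0 by simp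
    then have ne: "norm ` spectrum M \<noteq> {}" by auto
    have "\<forall>a\<in>norm ` spectrum M. a < 1"
    proof
      fix a assume "a \<in> norm ` spectrum M"
      then obtain e where e: "e \<in> spectrum M" "a = norm e" by auto
      have "e / c \<in> spectrum Ac" using spec e by auto
      then have "norm (e / c) \<le> spectral_radius Ac"
        unfolding spectral_radius_def using finA by (intro Max_ge) auto
      also have "\<dots> \<le> \<rho>" unfolding \<rho>_def by simp
      finally have "norm e * r \<le> \<rho>" using r0 unfolding c_def by (simp add: norm_divide norm_mult)
      then have "norm e * r < r" using r0 by linarith
      have "norm e < 1"
      proof (rule ccontr)
        assume "\<not> norm e < 1"
        then have "1 * r \<le> norm e * r" using r0 by (intro mult_right_mono) auto
        then show False using \<open>norm e * r < r\<close> by linarith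
      qed
      then show "a < 1" using e by simp
    qed
    then show ?thesis unfolding spectral_radius_def using finM ne by (simp add: Max_less_iff)
  qed
  obtain as where "char_poly M = (\<Prod> a \<leftarrow> as. [:- a, 1:])" using char_poly_factorized[OF M] by auto
  from spectral_radius_jnf_norm_bound_less_1[OF M srM jordan_nf_exists[OF M this]]
  obtain K where K: "\<And>k. norm_bound (M ^\<^sub>m k) K" by auto
  show ?thesis
  proof (intro exI conjI allI impI)
    fix k i j assume ij: "i < n" "j < n"
    have "M ^\<^sub>m k = c ^ k \<cdot>\<^sub>m map_mat complex_of_real (A ^\<^sub>m k)"
      unfolding M_def smult_pow_mat[OF Ac] unfolding Ac_def of_real_hom.mat_hom_pow[OF A] by simp
    then have "norm (c ^ k * complex_of_real ((A ^\<^sub>m k) $$ (i,j))) \<le> K"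
      using K[of k] ij A unfolding norm_bound_def by auto
    then have "(1/r) ^ k * \<bar>(A ^\<^sub>m k) $$ (i,j)\<bar> \<le> K"
      using r0 unfolding c_def by (simp add: norm_mult norm_power norm_divide)
    then show "\<bar>(A ^\<^sub>m k) $$ (i,j)\<bar> \<le> K * r ^ k"
      using r0 by (simp add: field_simps power_divide)
  qed (use r0 in auto)
qed
definition opset :: "inf_mat \<Rightarrow> real set" where
  "opset M = { sqrt (\<Sum>i<N. (\<Sum>j\<in>F. M i j * x j)\<^sup>2) | N F x.
       finite F \<and> (\<Sum>j\<in>F. (x j)\<^sup>2) \<le> 1 }"

lemma l2_opnorm_opset: "l2_opnorm M = Sup (opset M)"
  unfolding l2_opnorm_def opset_def ..

lemma opset_ne: "opset M \<noteq> {}"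
proof -
  have "sqrt (\<Sum>i<0. (\<Sum>j\<in>{}. M i j * (\<lambda>_. 0) j)\<^sup>2) \<in> opset M"
    unfolding opset_def by (intro CollectI exI[of _ 0] exI[of _ "{}"] exI[of _ "\<lambda>_. 0::real"]) auto
  then show ?thesis by auto
qed

lemma opset_le:
  assumes "bdd_above (opset M)" "finite F" "(\<Sum>j\<in>F. (x j)\<^sup>2) \<le> 1"
  shows "(\<Sum>i<N. (\<Sum>j\<in>F. M i j * x j)\<^sup>2) \<le> (Sup (opset M))\<^sup>2"
proof -
  let ?u = "(\<Sum>i<N. (\<Sum>j\<in>F. M i j * x j)\<^sup>2)"
  have "sqrt ?u \<in> opset M" unfolding opset_def using assms by blast
  then have le: "sqrt ?u \<le> Sup (opset M)" using assms(1) by (rule cSup_upper)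
  have u0: "0 \<le> ?u" by (rule sum_nonneg) (rule zero_le_power2)
  have "(sqrt ?u)\<^sup>2 \<le> (Sup (opset M))\<^sup>2" by (rule power_mono[OF le]) (simp add: u0)
  then show ?thesis using u0 by simp
qed

lemma opnorm_compare:
  fixes M1 M2 :: inf_mat
  assumes bdd: "bdd_above (opset M2)"
    and rows: "\<And>i. (\<forall>j. M1 i j = M2 i j) \<or> (\<forall>j. M1 i j = (if P j then M2 i j else 0))"
  shows "l2_opnorm M1 \<le> sqrt 2 * l2_opnorm M2"
proof -
  define \<sigma> where "\<sigma> = Sup (opset M2)"
  have \<sigma>0: "0 \<le> \<sigma>"
  proof -
    have "(\<Sum>i<0. (\<Sum>j\<in>{}. M2 i j * (\<lambda>_. 0) j)\<^sup>2) \<le> \<sigma>\<^sup>2" unfolding \<sigma>_def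
      by (rule opset_le[OF bdd]) auto
    have "sqrt (\<Sum>i<0. (\<Sum>j\<in>{}. M2 i j * (\<lambda>_. 0) j)\<^sup>2) \<in> opset M2"
      unfolding opset_def by (intro CollectI exI[of _ 0] exI[of _ "{}"] exI[of _ "\<lambda>_. 0::real"]) auto
    then have "sqrt (\<Sum>i<0. (\<Sum>j\<in>{}. M2 i j * (\<lambda>_. 0) j)\<^sup>2) \<le> \<sigma>" unfolding \<sigma>_def
      using bdd by (rule cSup_upper)
    then show ?thesis by simp
  qed
  show ?thesis unfolding l2_opnorm_opset
  proof (rule cSup_least[OF opset_ne])
    fix y assume "y \<in> opset M1"
    then obtain N F x where y: "y = sqrt (\<Sum>i<N. (\<Sum>j\<in>F. M1 i j * x j)\<^sup>2)"
      and F: "finite F" and x: "(\<Sum>j\<in>F. (x j)\<^sup>2) \<le> 1" unfolding opset_def by blast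
    define x' where "x' j = (if P j then x j else 0)" for j
    have x': "(\<Sum>j\<in>F. (x' j)\<^sup>2) \<le> 1"
      using x by (rule order_trans[rotated]) (auto intro!: sum_mono simp: x'_def)
    have pt: "(\<Sum>j\<in>F. M1 i j * x j)\<^sup>2 \<le> (\<Sum>j\<in>F. M2 i j * x j)\<^sup>2 + (\<Sum>j\<in>F. M2 i j * x' j)\<^sup>2" for i
    proof (cases "\<forall>j. M1 i j = M2 i j")
      case True then show ?thesis by simp
    next
      case False
      then have "\<forall>j. M1 i j = (if P j then M2 i j else 0)" using rows by blast
      then have "(\<Sum>j\<in>F. M1 i j * x j) = (\<Sum>j\<in>F. M2 i j * x' j)"
        unfolding x'_def by (intro sum.cong) auto
      then show ?thesis by simp
    qed
    have "(\<Sum>i<N. (\<Sum>j\<in>F. M1 i j * x j)\<^sup>2) \<le>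
        (\<Sum>i<N. (\<Sum>j\<in>F. M2 i j * x j)\<^sup>2) + (\<Sum>i<N. (\<Sum>j\<in>F. M2 i j * x' j)\<^sup>2)"
      unfolding sum.distrib[symmetric] by (intro sum_mono pt)
    also have "\<dots> \<le> \<sigma>\<^sup>2 + \<sigma>\<^sup>2" unfolding \<sigma>_def
      by (intro add_mono opset_le[OF bdd F x] opset_le[OF bdd F x'])
    finally have "y \<le> sqrt (2 * \<sigma>\<^sup>2)" unfolding y by simp
    also have "\<dots> = sqrt 2 * \<sigma>" using \<sigma>0 by (simp add: real_sqrt_mult)
    finally show "y \<le> sqrt 2 * Sup (opset M2)" unfolding \<sigma>_def .
  qed
qed

lemma opset_bdd:
  fixes M :: inf_mat
  assumes "\<And>i j. \<bar>M i j\<bar> \<le> g i * h j" "\<And>i. 0 \<le> g i" "\<And>j. 0 \<le> h j"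
    and "\<And>N. (\<Sum>i<N. (g i)\<^sup>2) \<le> G" "\<And>F. finite F \<Longrightarrow> (\<Sum>j\<in>F. (h j)\<^sup>2) \<le> Hh"
  shows "bdd_above (opset M)"
proof (rule bdd_aboveI)
  fix y assume "y \<in> opset M"
  then obtain N F x where y: "y = sqrt (\<Sum>i<N. (\<Sum>j\<in>F. M i j * x j)\<^sup>2)"
    and F: "finite F" and x: "(\<Sum>j\<in>F. (x j)\<^sup>2) \<le> 1" unfolding opset_def by blast
  have Hh0: "0 \<le> Hh" using assms(5)[of "{}"] by simp
  have row: "(\<Sum>j\<in>F. M i j * x j)\<^sup>2 \<le> (g i)\<^sup>2 * Hh" for i
  proof -
    have "(\<Sum>j\<in>F. M i j * x j)\<^sup>2 = \<bar>\<Sum>j\<in>F. M i j * x j\<bar>\<^sup>2" by simp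
    also have "\<dots> \<le> (\<Sum>j\<in>F. (g i * h j) * \<bar>x j\<bar>)\<^sup>2"
    proof (intro power_mono)
      show "\<bar>\<Sum>j\<in>F. M i j * x j\<bar> \<le> (\<Sum>j\<in>F. (g i * h j) * \<bar>x j\<bar>)"
        by (rule order_trans[OF sum_abs]) (auto intro!: sum_mono mult_right_mono simp: abs_mult assms(1))
    qed simp
    also have "\<dots> = (g i)\<^sup>2 * (\<Sum>j\<in>F. h j * \<bar>x j\<bar>)\<^sup>2"
      by (simp add: sum_distrib_left[symmetric] power_mult_distrib mult.assoc)
    also have "\<dots> \<le> (g i)\<^sup>2 * ((\<Sum>j\<in>F. (h j)\<^sup>2) * (\<Sum>j\<in>F. \<bar>x j\<bar>\<^sup>2))"
      by (intro mult_left_mono Cauchy_Schwarz_ineq_sum) simp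
    also have "\<dots> \<le> (g i)\<^sup>2 * (Hh * 1)"
      using x assms(5)[OF F] Hh0 by (intro mult_left_mono mult_mono) (auto intro: sum_nonneg)
    finally show ?thesis by simp
  qed
  have "(\<Sum>i<N. (\<Sum>j\<in>F. M i j * x j)\<^sup>2) \<le> (\<Sum>i<N. (g i)\<^sup>2 * Hh)" by (intro sum_mono row)
  also have "\<dots> = (\<Sum>i<N. (g i)\<^sup>2) * Hh" by (simp add: sum_distrib_right)
  also have "\<dots> \<le> G * Hh" using assms(4) Hh0 by (intro mult_right_mono) auto
  finally show "y \<le> sqrt (G * Hh)" unfolding y by simp
qed
lemma block_sum_inner:
  fixes f :: "nat \<Rightarrow> real"
  assumes "(\<Sum>row<p*N. f (row div p)) = S" "t \<le> p"
  shows "(\<Sum>row<p*N+t. f (row div p)) = S + real t * f N"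
  using assms(2)
proof (induction t)
  case 0 then show ?case using assms(1) by simp
next
  case (Suc t)
  have "(p*N+t) div p = N" using Suc.prems by (simp add: div_add1_eq[of "p*N"])
  then show ?case using Suc by (simp add: algebra_simps)
qed

lemma block_sum:
  fixes f :: "nat \<Rightarrow> real"
  shows "(\<Sum>row<p*N. f (row div p)) = real p * (\<Sum>i<N. f i)"
proof (induction N)
  case 0 then show ?case by simp
next
  case (Suc N)
  have "(\<Sum>row<p*Suc N. f (row div p)) = (\<Sum>row<p*N+p. f (row div p))" by (simp add: algebra_simps)
  also have "\<dots> = real p * (\<Sum>i<N. f i) + real p * f N" by (rule block_sum_inner[OF Suc.IH]) simp
  finally show ?case by (simp add: algebra_simps)
qed

lemma geom_le:
  fixes q :: real
  assumes "0 \<le> q" "q < 1"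
  shows "(\<Sum>i<N. q ^ i) \<le> 1 / (1 - q)"
proof -
  have "(\<Sum>i<N. q ^ i) \<le> (\<Sum>i. q ^ i)"
    using assms by (intro sum_le_suminf summable_geometric) auto
  also have "\<dots> = 1 / (1 - q)" using assms by (intro suminf_geometric) auto
  finally show ?thesis .
qed

lemma block_geom_le:
  fixes q :: real
  assumes "0 \<le> q" "q < 1" "0 < p"
  shows "(\<Sum>row<N. q ^ (row div p)) \<le> real p / (1 - q)"
proof -
  have "(\<Sum>row<N. q ^ (row div p)) \<le> (\<Sum>row<p*N. q ^ (row div p))"
    using assms by (intro sum_mono2) auto
  also have "\<dots> = real p * (\<Sum>i<N. q ^ i)" by (rule block_sum)
  also have "\<dots> \<le> real p * (1 / (1 - q))" using geom_le[OF assms(1,2)] by (intro mult_left_mono) auto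
  finally show ?thesis by simp
qed

lemma block_geom_le_fin:
  fixes q :: real
  assumes "0 \<le> q" "q < 1" "0 < p" "finite F"
  shows "(\<Sum>row\<in>F. q ^ (row div p)) \<le> real p / (1 - q)"
proof -
  have "F \<subseteq> {..<Suc (Max (insert 0 F))}" using assms(4) by (auto simp: less_Suc_eq_le)
  then have "(\<Sum>row\<in>F. q ^ (row div p)) \<le> (\<Sum>row<Suc (Max (insert 0 F)). q ^ (row div p))"
    using assms by (intro sum_mono2) auto
  also have "\<dots> \<le> real p / (1 - q)" by (rule block_geom_le[OF assms(1-3)])
  finally show ?thesis .
qed

lemma triple_bound:
  fixes C X B :: "real mat"
  assumes "C \<in> carrier_mat p n" "X \<in> carrier_mat n n" "B \<in> carrier_mat n m" "s < p" "t < m"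
    and Xb: "\<And>a b. a < n \<Longrightarrow> b < n \<Longrightarrow> \<bar>X $$ (a,b)\<bar> \<le> Kx"
  shows "\<bar>(C * X * B) $$ (s,t)\<bar> \<le> (\<Sum>a<n. \<bar>C $$ (s,a)\<bar>) * (\<Sum>b<n. \<bar>B $$ (b,t)\<bar>) * Kx"
proof -
  have e: "(C * X * B) $$ (s,t) = (\<Sum>b<n. (\<Sum>a<n. C $$ (s,a) * X $$ (a,b)) * B $$ (b,t))"
  proof -
    define D where "D = C * X"
    have D: "D \<in> carrier_mat p n" unfolding D_def using assms(1,2) by auto
    have "(D * B) $$ (s,t) = (\<Sum>b<n. D $$ (s,b) * B $$ (b,t))"
      using D assms(3-5) by (simp add: scalar_prod_def atLeast0LessThan)
    moreover have "D $$ (s,b) = (\<Sum>a<n. C $$ (s,a) * X $$ (a,b))" if "b < n" for b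
      unfolding D_def using assms(1-4) that by (simp add: scalar_prod_def atLeast0LessThan)
    ultimately show ?thesis unfolding D_def by simp
  qed
  have "\<bar>(C * X * B) $$ (s,t)\<bar> \<le> (\<Sum>b<n. \<bar>(\<Sum>a<n. C $$ (s,a) * X $$ (a,b)) * B $$ (b,t)\<bar>)"
    unfolding e by (rule sum_abs)
  also have "\<dots> \<le> (\<Sum>b<n. (\<Sum>a<n. \<bar>C $$ (s,a)\<bar> * Kx) * \<bar>B $$ (b,t)\<bar>)"
  proof (intro sum_mono)
    fix b assume b: "b \<in> {..<n}"
    have "\<bar>\<Sum>a<n. C $$ (s,a) * X $$ (a,b)\<bar> \<le> (\<Sum>a<n. \<bar>C $$ (s,a) * X $$ (a,b)\<bar>)" by (rule sum_abs)
    also have "\<dots> \<le> (\<Sum>a<n. \<bar>C $$ (s,a)\<bar> * Kx)"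
      using b Xb by (auto intro!: sum_mono mult_left_mono simp: abs_mult)
    finally show "\<bar>(\<Sum>a<n. C $$ (s,a) * X $$ (a,b)) * B $$ (b,t)\<bar> \<le> (\<Sum>a<n. \<bar>C $$ (s,a)\<bar> * Kx) * \<bar>B $$ (b,t)\<bar>"
      by (simp add: abs_mult mult_right_mono)
  qed
  also have "\<dots> = (\<Sum>b<n. ((\<Sum>a<n. \<bar>C $$ (s,a)\<bar>) * Kx) * \<bar>B $$ (b,t)\<bar>)"
    by (simp only: sum_distrib_right)
  also have "\<dots> = ((\<Sum>a<n. \<bar>C $$ (s,a)\<bar>) * Kx) * (\<Sum>b<n. \<bar>B $$ (b,t)\<bar>)"
    by (simp only: sum_distrib_left)
  also have "\<dots> = (\<Sum>a<n. \<bar>C $$ (s,a)\<bar>) * (\<Sum>b<n. \<bar>B $$ (b,t)\<bar>) * Kx"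
    by (simp only: mult_ac)
  finally show ?thesis .
qed
lemma bh_None: "block_hankel C A B k None None r c =
  (if r mod dim_row C < dim_row C \<and> c mod dim_col B < dim_col B
   then (C * A ^\<^sub>m (k + r div dim_row C + c div dim_col B) * B) $$ (r mod dim_row C, c mod dim_col B) else 0)"
  unfolding block_hankel_def Let_def by simp

lemma bh_diff: "block_hankel C A B k None None r c - block_hankel C A B k (Some d) (Some d) r c =
  (if r div dim_row C < d \<and> c div dim_col B < d then 0 else block_hankel C A B k None None r c)"
  unfolding block_hankel_def Let_def by simp

lemma hankel_bound:
  fixes C A B :: "real mat"
  assumes C: "C \<in> carrier_mat p n" and A: "A \<in> carrier_mat n n" and B: "B \<in> carrier_mat n m"
    and sr: "spectral_radius (map_mat complex_of_real A) < 1"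
  shows "\<exists>g h G Hh. (\<forall>i. 0 \<le> g i) \<and> (\<forall>j. 0 \<le> h j) \<and>
     (\<forall>i j. \<bar>block_hankel C A B 0 None None i j\<bar> \<le> g i * h j) \<and>
     (\<forall>N. (\<Sum>i<N. (g i)\<^sup>2) \<le> G) \<and> (\<forall>F. finite F \<longrightarrow> (\<Sum>j\<in>F. (h j)\<^sup>2) \<le> Hh)"
proof -
  obtain K r where r: "0 < r" "r < 1"
    and Kb: "\<And>k i j. i < n \<Longrightarrow> j < n \<Longrightarrow> \<bar>(A ^\<^sub>m k) $$ (i,j)\<bar> \<le> K * r ^ k"
    using decay[OF A sr] by blast
  define K' where "K' = max K 0"
  have K'0: "0 \<le> K'" unfolding K'_def by simp
  have Kb': "\<bar>(A ^\<^sub>m k) $$ (a,b)\<bar> \<le> K' * r ^ k" if "a < n" "b < n" for k a b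
  proof -
    have "K * r ^ k \<le> K' * r ^ k" unfolding K'_def using r by (intro mult_right_mono) auto
    then show ?thesis using Kb[OF that, of k] by linarith
  qed
  define u where "u = sqrt r"
  have u0: "0 \<le> u" unfolding u_def using r by simp
  have u2: "u\<^sup>2 = r" unfolding u_def using r by simp
  have u1: "u \<le> 1" unfolding u_def using r by simp
  have ru: "r \<le> u" using u2 u0 u1 by (metis mult_left_le power2_eq_square)
  have upow: "(u ^ k)\<^sup>2 = r ^ k" for k
    using u2 by (metis power_mult mult.commute)
  define L where "L = (\<Sum>s<p. \<Sum>t<m. (\<Sum>a<n. \<bar>C $$ (s,a)\<bar>) * (\<Sum>b<n. \<bar>B $$ (b,t)\<bar>))"
  have L0: "0 \<le> L" unfolding L_def by (intro sum_nonneg mult_nonneg_nonneg) auto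
  define g where "g i = (if p = 0 then 0 else L * K' * u ^ (i div p))" for i
  define h where "h j = (if m = 0 then 0 else u ^ (j div m))" for j
  define G where "G = (L * K')\<^sup>2 * (real p / (1 - r))"
  define Hh where "Hh = real m / (1 - r)"
  have dC: "dim_row C = p" and dB: "dim_col B = m" using C B by auto
  have g0: "0 \<le> g i" for i unfolding g_def using L0 K'0 u0 by auto
  have h0: "0 \<le> h j" for j unfolding h_def using u0 by auto
  have gh: "\<bar>block_hankel C A B 0 None None i j\<bar> \<le> g i * h j" for i j
    proof (cases "i mod p < p \<and> j mod m < m")
      case False
      have "block_hankel C A B 0 None None i j = 0"
        unfolding bh_None dC dB by (rule if_not_P[OF False])
      then show ?thesis using g0 h0 by simp
    next
      case True
      then have pm: "p \<noteq> 0" "m \<noteq> 0" by auto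
      define k where "k = i div p + j div m"
      have e: "block_hankel C A B 0 None None i j = (C * A ^\<^sub>m k * B) $$ (i mod p, j mod m)"
        unfolding bh_None dC dB k_def add_0 by (rule if_P[OF True])
      have "\<bar>(C * A ^\<^sub>m k * B) $$ (i mod p, j mod m)\<bar> \<le>
          (\<Sum>a<n. \<bar>C $$ (i mod p,a)\<bar>) * (\<Sum>b<n. \<bar>B $$ (b,j mod m)\<bar>) * (K' * r ^ k)"
        using True by (intro triple_bound[OF C pow_carrier_mat[OF A] B] Kb') auto
      also have "\<dots> \<le> L * (K' * r ^ k)"
      proof (intro mult_right_mono)
        have "(\<Sum>a<n. \<bar>C $$ (i mod p,a)\<bar>) * (\<Sum>b<n. \<bar>B $$ (b,j mod m)\<bar>) \<le>
            (\<Sum>t<m. (\<Sum>a<n. \<bar>C $$ (i mod p,a)\<bar>) * (\<Sum>b<n. \<bar>B $$ (b,t)\<bar>))"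
          using True by (intro member_le_sum[of "j mod m"]) (auto intro!: mult_nonneg_nonneg sum_nonneg)
        also have "\<dots> \<le> L" unfolding L_def
          using True by (intro member_le_sum[of "i mod p"]) (auto intro!: mult_nonneg_nonneg sum_nonneg)
        finally show "(\<Sum>a<n. \<bar>C $$ (i mod p,a)\<bar>) * (\<Sum>b<n. \<bar>B $$ (b,j mod m)\<bar>) \<le> L" .
      qed (use K'0 r in auto)
      also have "\<dots> \<le> L * (K' * u ^ k)"
        using L0 K'0 r ru by (intro mult_left_mono power_mono) auto
      also have "\<dots> = g i * h j" unfolding g_def h_def k_def using pm by (simp add: power_add)
      finally show ?thesis unfolding e .
    qed
  have gs: "(\<Sum>i<N. (g i)\<^sup>2) \<le> G" for N
    proof (cases "p = 0")
      case True
      then show ?thesis unfolding g_def G_def using r by simp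
    next
      case False
      have "(\<Sum>i<N. (g i)\<^sup>2) = (L * K')\<^sup>2 * (\<Sum>i<N. r ^ (i div p))"
        unfolding g_def using False by (simp add: power_mult_distrib upow sum_distrib_left)
      also have "\<dots> \<le> G" unfolding G_def
        using False r by (intro mult_left_mono block_geom_le) auto
      finally show ?thesis .
    qed
  have hs: "(\<Sum>j\<in>F. (h j)\<^sup>2) \<le> Hh" if F: "finite F" for F
    proof (cases "m = 0")
      case True
      then show ?thesis unfolding h_def Hh_def using r by simp
    next
      case False
      have "(\<Sum>j\<in>F. (h j)\<^sup>2) = (\<Sum>j\<in>F. r ^ (j div m))"
        unfolding h_def using False by (simp add: upow)
      also have "\<dots> \<le> Hh" unfolding Hh_def
        using False r F by (intro block_geom_le_fin) auto
      finally show ?thesis .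
    qed
  show ?thesis using g0 h0 gh gs hs by blast
qed
theorem proposition14:
  fixes C A B :: "real mat" and p n m d1 d2 :: nat
  assumes "C \<in> carrier_mat p n" and "A \<in> carrier_mat n n" and "B \<in> carrier_mat n m"
    and "spectral_radius (map_mat complex_of_real A) < 1"
    and "d1 \<ge> d2" and "d2 \<ge> 1"
  shows "l2_opnorm (\<lambda>r c. block_hankel C A B 0 None None r c - block_hankel C A B 0 (Some d1) (Some d1) r c)
         \<le> sqrt 2 * l2_opnorm (\<lambda>r c. block_hankel C A B 0 None None r c - block_hankel C A B 0 (Some d2) (Some d2) r c)"
proof -
  obtain g h G Hh where g0: "\<And>i. 0 \<le> g i" and h0: "\<And>j. 0 \<le> h j"
    and gh: "\<And>i j. \<bar>block_hankel C A B 0 None None i j\<bar> \<le> g i * h j"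
    and gs: "\<And>N. (\<Sum>i<N. (g i)\<^sup>2) \<le> G" and hs: "\<And>F. finite F \<Longrightarrow> (\<Sum>j\<in>F. (h j)\<^sup>2) \<le> Hh"
    using hankel_bound[OF assms(1-4)] by metis
  let ?H = "block_hankel C A B 0 None None"
  let ?M2 = "\<lambda>r c. block_hankel C A B 0 None None r c - block_hankel C A B 0 (Some d2) (Some d2) r c"
  let ?M1 = "\<lambda>r c. block_hankel C A B 0 None None r c - block_hankel C A B 0 (Some d1) (Some d1) r c"
  have bdd: "bdd_above (opset ?M2)"
  proof (rule opset_bdd[OF _ g0 h0 gs hs])
    fix i j
    show "\<bar>?M2 i j\<bar> \<le> g i * h j"
      unfolding bh_diff using gh[of i j] g0[of i] h0[of j] by simp
  qed
  show ?thesis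
  proof (rule opnorm_compare[OF bdd, of _ "\<lambda>j. d1 \<le> j div dim_col B"])
    fix i
    show "(\<forall>j. ?M1 i j = ?M2 i j) \<or> (\<forall>j. ?M1 i j = (if d1 \<le> j div dim_col B then ?M2 i j else 0))"
    proof (cases "d1 \<le> i div dim_row C")
      case True
      then show ?thesis using assms(5) unfolding bh_diff by simp
    next
      case False
      then show ?thesis using assms(5) unfolding bh_diff by auto
    qed
  qed
qed

end
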